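(* Let $\{x_i\}_{i\in[N]}$ be the global solution of the delayed consensus system described in the context, let $\beta>0$ and \[ F(t):=d_x(t)+\beta\int_{\max\{0,t-2\tau\}}^t e^{-(t-s)}\int_s^t\max_{i\in[N]}|\dot x_i(r)|\,\mathrm dr\,\mathrm ds,\qquad t\ge0. \] Then for all $i,j\in[N]$ and $t\ge2\tau$, \[ |x_j(t-\tau)-x_i(t-\sigma)|\le d_x(t-\tau)+\int_{t-\tau}^{t-\sigma}d_x(s-\tau)\,\mathrm ds+\beta^{-1}e^{2\tau}F(t-\sigma). \]
   Context: Let $N\ge2$, $d\ge1$ be integers, $[N]=\{1,\dots,N\}$, $0\le\sigma\le\tau$. Let $\psi:[0,\infty)\to[0,\infty)$ be continuous, nonincreasing, positive everywhere, with $\sup\psi\le1$. Given $x_i^0\in C([-\tau,0],\mathbb{R}^d)$, $\{x_i\}$ is the global solution (continuous on $[-\tau,\infty)$, continuously differentiable on $[0,\infty)$) of $\dot x_i(t)=\sum_{j\ne i}a_{ij}(t)(x_j(t-\tau)-x_i(t-\sigma))$ for $t>0$, with $a_{ij}(t)=\frac1{N-1}\psi(|x_i(t-\sigma)-x_j(t-\tau)|)$, and $x_i=x_i^0$ on $[-\tau,0]$. $d_x(t):=\max_{i,j\in[N]}|x_i(t)-x_j(t)|$. *)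

theory Defs
  imports "HOL-Analysis.Analysis"
begin

definition diam_x :: "nat \<Rightarrow> (nat \<Rightarrow> real \<Rightarrow> 'a::real_normed_vector) \<Rightarrow> real \<Rightarrow> real" where
  "diam_x N x t = Max {norm (x i t - x j t) | i j. i \<in> {1..N} \<and> j \<in> {1..N}}"

definition max_speed :: "nat \<Rightarrow> (nat \<Rightarrow> real \<Rightarrow> 'a::real_normed_vector) \<Rightarrow> real \<Rightarrow> real" where
  "max_speed N x' r = Max ((\<lambda>i. norm (x' i r)) ` {1..N})"

definition lyap_F :: "nat \<Rightarrow> real \<Rightarrow> real \<Rightarrow> (nat \<Rightarrow> real \<Rightarrow> 'a::real_normed_vector)
    \<Rightarrow> (nat \<Rightarrow> real \<Rightarrow> 'a) \<Rightarrow> real \<Rightarrow> real" where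
  "lyap_F N \<tau> \<beta> x x' t = diam_x N x t +
     \<beta> * integral {max 0 (t - 2 * \<tau>)..t}
           (\<lambda>s. exp (-(t - s)) * integral {s..t} (\<lambda>r. max_speed N x' r))"

end

theory Submission
  imports Defs
begin

lemma cont_Max_fin:
  fixes f :: "'i \<Rightarrow> real \<Rightarrow> real"
  assumes "finite I" "I \<noteq> {}" "\<And>i. i \<in> I \<Longrightarrow> continuous_on S (f i)"
  shows "continuous_on S (\<lambda>r. Max ((\<lambda>i. f i r) ` I))"
  using assms
proof (induction I rule: finite_ne_induct)
  case (singleton x)
  then show ?case by simp
next
  case (insert x F)
  have e: "(\<lambda>r. Max ((\<lambda>i. f i r) ` insert x F)) = (\<lambda>r. max (f x r) (Max ((\<lambda>i. f i r) ` F)))"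
    using insert.hyps by (auto simp: Max_insert)
  show ?case unfolding e
    by (intro continuous_on_max insert.IH) (auto intro: insert.prems)
qed

lemma diam_eq:
  "diam_x N x t = Max ((\<lambda>p. norm (x (fst p) t - x (snd p) t)) ` ({1..N}\<times>{1..N}))"
  unfolding diam_x_def by (rule arg_cong[where f=Max]) force

lemma diam_ge:
  assumes "i \<in> {1..N}" "j \<in> {1..N}"
  shows "norm (x i t - x j t) \<le> diam_x N x t"
  unfolding diam_eq using assms by (intro Max_ge) (auto intro!: rev_image_eqI[of "(i,j)"])

lemma speed_ge:
  assumes "i \<in> {1..N}"
  shows "norm (x' i t) \<le> max_speed N x' t"
  unfolding max_speed_def using assms by (intro Max_ge) auto

theorem lemma3p5:
  fixes N :: nat and \<sigma> \<tau> \<beta> :: real and \<psi> :: "real \<Rightarrow> real"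
    and x x' :: "nat \<Rightarrow> real \<Rightarrow> real ^ 'd"
  assumes N2: "N \<ge> 2"
    and sig: "0 \<le> \<sigma>" "\<sigma> \<le> \<tau>"
    and psi_cont: "continuous_on {0..} \<psi>"
    and psi_mono: "\<And>a b. 0 \<le> a \<Longrightarrow> a \<le> b \<Longrightarrow> \<psi> b \<le> \<psi> a"
    and psi_pos: "\<And>r. 0 \<le> r \<Longrightarrow> \<psi> r > 0"
    and psi_le1: "\<And>r. 0 \<le> r \<Longrightarrow> \<psi> r \<le> 1"
    and x_cont: "\<And>i. i \<in> {1..N} \<Longrightarrow> continuous_on {-\<tau>..} (x i)"
    and x_deriv: "\<And>i t. i \<in> {1..N} \<Longrightarrow> 0 \<le> t \<Longrightarrow>
                    (x i has_vector_derivative x' i t) (at t within {0..})"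
    and x'_cont: "\<And>i. i \<in> {1..N} \<Longrightarrow> continuous_on {0..} (x' i)"
    and ode: "\<And>i t. i \<in> {1..N} \<Longrightarrow> 0 < t \<Longrightarrow>
               x' i t = (\<Sum>j\<in>{1..N} - {i}.
                 ((1 / (real N - 1)) * \<psi> (norm (x i (t - \<sigma>) - x j (t - \<tau>))))
                   *\<^sub>R (x j (t - \<tau>) - x i (t - \<sigma>)))"
    and beta: "\<beta> > 0"
    and ij: "i \<in> {1..N}" "j \<in> {1..N}"
    and t: "t \<ge> 2 * \<tau>"
  shows "norm (x j (t - \<tau>) - x i (t - \<sigma>))
           \<le> diam_x N x (t - \<tau>) + integral {t - \<tau>..t - \<sigma>} (\<lambda>s. diam_x N x (s - \<tau>))
              + exp (2 * \<tau>) / \<beta> * lyap_F N \<tau> \<beta> x x' (t - \<sigma>)"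
proof -
  define M where "M = max_speed N x'"
  define D where "D = diam_x N x"
  have NE: "{1..N} \<noteq> {}" using N2 by auto
  have M_ge: "\<And>k r. k \<in> {1..N} \<Longrightarrow> norm (x' k r) \<le> M r"
    unfolding M_def by (rule speed_ge)
  have M_nn: "0 \<le> M r" for r
  proof -
    have "norm (x' 1 r) \<le> M r" using M_ge N2 by auto
    then show ?thesis using norm_ge_zero order_trans by blast
  qed
  have D_ge: "\<And>k l s. k \<in> {1..N} \<Longrightarrow> l \<in> {1..N} \<Longrightarrow> norm (x k s - x l s) \<le> D s"
    unfolding D_def by (rule diam_ge)
  have D_nn: "0 \<le> D s" for s
  proof -
    have "norm (x 1 s - x 1 s) \<le> D s" using D_ge[of 1 1 s] N2 by auto
    then show ?thesis by simp
  qed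
  have contM: "continuous_on {0..} M"
    unfolding M_def max_speed_def
    by (rule cont_Max_fin) (use NE x'_cont in \<open>auto intro: continuous_on_norm\<close>)
  have contD: "continuous_on {-\<tau>..} D"
    unfolding D_def diam_eq
    by (rule cont_Max_fin) (use NE x_cont in \<open>auto intro!: continuous_on_norm continuous_on_diff\<close>)
  have intM: "\<And>a b. 0 \<le> a \<Longrightarrow> M integrable_on {a..b}"
    by (rule integrable_continuous_interval, rule continuous_on_subset[OF contM]) auto
  have ftc: "\<And>k (a::real) b. k \<in> {1..N} \<Longrightarrow> 0 \<le> a \<Longrightarrow> a \<le> b \<Longrightarrow> norm (x k b - x k a) \<le> integral {a..b} M"
  proof -
    fix k and a b :: real assume k: "k \<in> {1..N}" and ab: "0 \<le> a" "a \<le> b"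
    have "(x' k has_integral (x k b - x k a)) {a..b}"
      by (rule fundamental_theorem_of_calculus[OF ab(2)])
         (rule has_vector_derivative_within_subset[OF x_deriv[OF k]], use ab in auto)
    then have "norm (x k b - x k a) = norm (integral {a..b} (x' k))" by (simp add: integral_unique)
    also have "\<dots> \<le> integral {a..b} M"
      by (rule integral_norm_bound_integral)
         (use \<open>(x' k has_integral _) _\<close> intM ab M_ge k in auto)
    finally show "norm (x k b - x k a) \<le> integral {a..b} M" .
  qed
  define T where "T = t - \<sigma>"
  define a where "a = max 0 (T - 2 * \<tau>)"
  define H where "H u = integral {u..T} M" for u
  define g where "g u = exp (-(T - u)) * H u" for u
  have tau0: "0 \<le> \<tau>" using sig by simp
  have T0: "\<tau> \<le> T" using sig t unfolding T_def by simp
  have a_le: "a \<le> t - 2 * \<tau>" "0 \<le> a" unfolding a_def T_def using sig t by auto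
  have contH: "continuous_on {0..T} H"
    unfolding H_def by (rule indefinite_integral_continuous_1'[OF intM]) simp
  have H_nn: "0 \<le> H u" if "0 \<le> u" for u
    unfolding H_def by (rule integral_nonneg[OF intM[OF that]]) (use M_nn in auto)
  have contg: "continuous_on {a..T} g"
    unfolding g_def
    by (intro continuous_intros continuous_on_subset[OF contH]) (use a_le in auto)
  have intg: "g integrable_on {c..T}" if "a \<le> c" for c
    by (rule integrable_continuous_interval, rule continuous_on_subset[OF contg]) (use that in auto)
  have intg2: "g integrable_on {c..d}" if "a \<le> c" "d \<le> T" for c d
    by (rule integrable_continuous_interval, rule continuous_on_subset[OF contg]) (use that in auto)
  have g_nn: "0 \<le> g u" if "a \<le> u" for u
    unfolding g_def using H_nn[of u] a_le that by simp
  have Fe: "lyap_F N \<tau> \<beta> x x' T = D T + \<beta> * integral {a..T} g"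
    unfolding lyap_F_def D_def M_def g_def H_def a_def by simp
  have key1: "norm (x j (t - \<tau>) - x i T) \<le> D (t - \<tau>) + integral {t - \<tau>..T} M"
  proof -
    have "norm (x j (t - \<tau>) - x i T) \<le> norm (x j (t - \<tau>) - x i (t - \<tau>)) + norm (x i T - x i (t - \<tau>))"
      using norm_triangle_ineq4[of "x j (t - \<tau>) - x i (t - \<tau>)" "x i T - x i (t - \<tau>)"] by simp
    moreover have "norm (x j (t - \<tau>) - x i (t - \<tau>)) \<le> D (t - \<tau>)" using D_ge ij by auto
    moreover have "norm (x i T - x i (t - \<tau>)) \<le> integral {t - \<tau>..T} M"
      by (rule ftc) (use ij t sig T_def in auto)
    ultimately show ?thesis by linarith
  qed
  have key2: "integral {t - \<tau>..T} M \<le> integral {t - \<tau>..T} (\<lambda>s. D (s - \<tau>)) + integral {t - \<tau>..T} (\<lambda>s. H (s - \<tau>))"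
  proof (cases "\<sigma> = \<tau>")
    case True
    then show ?thesis unfolding T_def by simp
  next
    case False
    then have tpos: "0 < \<tau>" using sig by simp
    have intD: "(\<lambda>s. D (s - \<tau>)) integrable_on {t - \<tau>..T}"
      by (rule integrable_continuous_interval, rule continuous_on_compose2[OF contD])
         (use t tau0 sig in \<open>auto intro!: continuous_intros simp: T_def\<close>)
    have intH: "(\<lambda>s. H (s - \<tau>)) integrable_on {t - \<tau>..T}"
      by (rule integrable_continuous_interval, rule continuous_on_compose2[OF contH])
         (use t tau0 sig in \<open>auto intro!: continuous_intros simp: T_def\<close>)
    have pw: "M s \<le> D (s - \<tau>) + H (s - \<tau>)" if s: "s \<in> {t - \<tau>..T}" for s
    proof -
      have spos: "0 < s" using s t tpos by auto
      obtain k where k: "k \<in> {1..N}" and Mk: "M s = norm (x' k s)"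
      proof -
        have "M s \<in> (\<lambda>i. norm (x' i s)) ` {1..N}"
          unfolding M_def max_speed_def by (rule Max_in) (use NE in auto)
        then show ?thesis using that by auto
      qed
      define B where "B = D (s - \<tau>) + H (s - \<tau>)"
      have Bl: "norm (x l (s - \<tau>) - x k (s - \<sigma>)) \<le> B" if l: "l \<in> {1..N}" for l
      proof -
        have "norm (x l (s - \<tau>) - x k (s - \<sigma>)) \<le> norm (x l (s - \<tau>) - x k (s - \<tau>)) + norm (x k (s - \<sigma>) - x k (s - \<tau>))"
          using norm_triangle_ineq4[of "x l (s - \<tau>) - x k (s - \<tau>)" "x k (s - \<sigma>) - x k (s - \<tau>)"] by simp
        moreover have "norm (x l (s - \<tau>) - x k (s - \<tau>)) \<le> D (s - \<tau>)" using D_ge l k by auto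
        moreover have "norm (x k (s - \<sigma>) - x k (s - \<tau>)) \<le> integral {s - \<tau>..s - \<sigma>} M"
          by (rule ftc) (use k s t sig tau0 in auto)
        moreover have "integral {s - \<tau>..s - \<sigma>} M \<le> H (s - \<tau>)"
          unfolding H_def
          by (rule integral_subset_le) (use s t sig tau0 M_nn intM in \<open>auto simp: T_def\<close>)
        ultimately show ?thesis unfolding B_def by linarith
      qed
      have cardN: "real (card ({1..N} - {k})) = real N - 1"
        using k N2 by (simp add: card_Diff_singleton of_nat_diff)
      have "M s = norm (\<Sum>l\<in>{1..N} - {k}. ((1 / (real N - 1)) * \<psi> (norm (x k (s - \<sigma>) - x l (s - \<tau>))))
                   *\<^sub>R (x l (s - \<tau>) - x k (s - \<sigma>)))"
        unfolding Mk using ode[OF k spos] by simp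
      also have "\<dots> \<le> (\<Sum>l\<in>{1..N} - {k}. norm (((1 / (real N - 1)) * \<psi> (norm (x k (s - \<sigma>) - x l (s - \<tau>))))
                   *\<^sub>R (x l (s - \<tau>) - x k (s - \<sigma>))))"
        by (rule norm_sum)
      also have "\<dots> \<le> (\<Sum>l\<in>{1..N} - {k}. (1 / (real N - 1)) * B)"
      proof (rule sum_mono)
        fix l assume l: "l \<in> {1..N} - {k}"
        have N1: "real N - 1 > 0" using N2 by simp
        let ?p = "\<psi> (norm (x k (s - \<sigma>) - x l (s - \<tau>)))"
        have p: "0 < ?p" "?p \<le> 1" using psi_pos psi_le1 by auto
        have "norm (((1 / (real N - 1)) * ?p) *\<^sub>R (x l (s - \<tau>) - x k (s - \<sigma>)))
              = (1 / (real N - 1)) * ?p * norm (x l (s - \<tau>) - x k (s - \<sigma>))"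
          using N1 p by simp
        also have "\<dots> \<le> (1 / (real N - 1)) * 1 * B"
          by (intro mult_mono Bl) (use l p N1 norm_ge_zero in auto)
        finally show "norm (((1 / (real N - 1)) * ?p) *\<^sub>R (x l (s - \<tau>) - x k (s - \<sigma>))) \<le> (1 / (real N - 1)) * B"
          by simp
      qed
      also have "\<dots> = B" using cardN N2 by simp
      finally show ?thesis unfolding B_def .
    qed
    have "integral {t - \<tau>..T} M \<le> integral {t - \<tau>..T} (\<lambda>s. D (s - \<tau>) + H (s - \<tau>))"
      by (rule integral_le) (use intM[of "t - \<tau>" T] t tau0 intD intH pw in \<open>auto intro: integrable_add\<close>)
    also have "\<dots> = integral {t - \<tau>..T} (\<lambda>s. D (s - \<tau>)) + integral {t - \<tau>..T} (\<lambda>s. H (s - \<tau>))"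
      by (rule integral_add[OF intD intH])
    finally show ?thesis .
  qed
  have key3: "integral {t - \<tau>..T} (\<lambda>s. H (s - \<tau>)) = integral {t - 2 * \<tau>..T - \<tau>} H"
  proof -
    have "integral {(t - 2 * \<tau>) - (- \<tau>)..(T - \<tau>) - (- \<tau>)} (\<lambda>s. H (s + - \<tau>)) = integral {t - 2 * \<tau>..T - \<tau>} H"
      by (rule integral_shift_real_ivl)
    then show ?thesis by simp
  qed
  have key4: "integral {t - 2 * \<tau>..T - \<tau>} H \<le> exp (2 * \<tau>) * integral {t - 2 * \<tau>..T - \<tau>} g"
  proof -
    have intg3: "g integrable_on {t - 2 * \<tau>..T - \<tau>}" by (rule intg2) (use a_le tau0 in auto)
    have intH3: "H integrable_on {t - 2 * \<tau>..T - \<tau>}"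
      by (rule integrable_continuous_interval, rule continuous_on_subset[OF contH]) (use t tau0 sig in auto)
    have "integral {t - 2 * \<tau>..T - \<tau>} H \<le> integral {t - 2 * \<tau>..T - \<tau>} (\<lambda>u. exp (2 * \<tau>) * g u)"
    proof (rule integral_le[OF intH3])
      show "(\<lambda>u. exp (2 * \<tau>) * g u) integrable_on {t - 2 * \<tau>..T - \<tau>}"
        using integrable_on_cmult_left[OF intg3, of "exp (2 * \<tau>)"] by simp
    next
      fix u assume u: "u \<in> {t - 2 * \<tau>..T - \<tau>}"
      have u0: "0 \<le> u" using u t by auto
      have "exp (2 * \<tau>) * g u = exp (2 * \<tau> - (T - u)) * H u"
        unfolding g_def by (simp add: exp_diff exp_minus exp_add field_simps)
      moreover have "1 \<le> exp (2 * \<tau> - (T - u))" using u sig unfolding T_def by simp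
      ultimately show "H u \<le> exp (2 * \<tau>) * g u"
        using H_nn[OF u0] by (metis mult_le_cancel_right1 linorder_not_le order_less_le)
    qed
    also have "\<dots> = exp (2 * \<tau>) * integral {t - 2 * \<tau>..T - \<tau>} g" by simp
    finally show ?thesis .
  qed
  have key5: "integral {t - 2 * \<tau>..T - \<tau>} g \<le> integral {a..T} g"
    by (rule integral_subset_le) (use a_le tau0 intg intg2 g_nn in auto)
  have I_nn: "0 \<le> integral {a..T} g"
    by (rule integral_nonneg[OF intg]) (use g_nn in auto)
  have "exp (2 * \<tau>) / \<beta> * lyap_F N \<tau> \<beta> x x' T = exp (2 * \<tau>) / \<beta> * D T + exp (2 * \<tau>) * integral {a..T} g"
    unfolding Fe using beta by (simp add: field_simps)
  moreover have "0 \<le> exp (2 * \<tau>) / \<beta> * D T" using beta D_nn by simp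
  moreover have "exp (2 * \<tau>) * integral {t - 2 * \<tau>..T - \<tau>} g \<le> exp (2 * \<tau>) * integral {a..T} g"
    using key5 by simp
  ultimately show ?thesis
    using key1 key2 key3 key4 unfolding T_def[symmetric] D_def[symmetric] by linarith
qed

end
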